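(* Let $F\in[0,1]$, $0\le p\le F$, and let $\rho_k=p|\Psi_{00}\rangle\langle\Psi_{00}|+(1-p)\sigma_k\in S_{p,F}$ for $k=1,2$, where $\sigma_1,\sigma_2$ are density operators. Write $\tilde p'_{ij}=p'_{ij}(\sigma_1\otimes\sigma_2)$ and $\tilde F'_{ij}=F'_{ij}(\sigma_1\otimes\sigma_2)$. Then for all $i,j$, $$p'_{ij}(\rho_1\otimes\rho_2)=\frac p2-\frac{p^2}4+(1-p)^2\tilde p'_{ij},\qquad F'_{ij}(\rho_1\otimes\rho_2)=\frac{2pF-p^2+4(1-p)^2\tilde p'_{ij}\tilde F'_{ij}}{2p-p^2+4(1-p)^2\tilde p'_{ij}}.$$
   Context: For qubit registers $(R,T)$, $|\Psi_{ij}\rangle_{RT}=(I_R\otimes(X^iZ^j)_T)\tfrac1{\sqrt2}(|00\rangle+|11\rangle)$. $S_{p,F}$ is the set of two-qubit density operators $\rho$ with $\rho=p|\Psi_{00}\rangle\langle\Psi_{00}|+(1-p)\sigma$ for some density operator $\sigma$ and $\langle\Psi_{00}|\rho|\Psi_{00}\rangle=F$. For two-qubit states $\tau_1$ on $(A_1,B_1)$ and $\tau_2$ on $(A_2,B_2)$: $p'_{ij}(\tau_1\otimes\tau_2)=\mathrm{Tr}[|\Psi_{ij}\rangle\langle\Psi_{ij}|_{A_1A_2}\tau_1\otimes\tau_2]$ and $F'_{ij}(\tau_1\otimes\tau_2)=\frac1{p'_{ij}}\mathrm{Tr}[|\Psi_{ij}\rangle\langle\Psi_{ij}|_{B_1B_2}|\Psi_{ij}\rangle\langle\Psi_{ij}|_{A_1A_2}\tau_1\otimes\tau_2]$.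 The product $\tilde p'_{ij}\tilde F'_{ij}$ denotes $\mathrm{Tr}[|\Psi_{ij}\rangle\langle\Psi_{ij}|_{B_1B_2}|\Psi_{ij}\rangle\langle\Psi_{ij}|_{A_1A_2}\sigma_1\otimes\sigma_2]$. *)

theory Defs
  imports "HOL-Analysis.Analysis"
begin

text \<open>Operators are represented in the computational basis as functions
  nat \<Rightarrow> nat \<Rightarrow> complex; only indices below the dimension matter.
  A two-qubit basis index is 2*a+b (first register a, second b).
  A four-qubit index for registers (A1,B1,A2,B2) is 8*a1+4*b1+2*a2+b2.\<close>

type_synonym cmat = "nat \<Rightarrow> nat \<Rightarrow> complex"
type_synonym cvec = "nat \<Rightarrow> complex"

definition matmul :: "nat \<Rightarrow> cmat \<Rightarrow> cmat \<Rightarrow> cmat" where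
  "matmul n A B = (\<lambda>i k. \<Sum>j<n. A i j * B j k)"

definition idm :: cmat where
  "idm = (\<lambda>i j. if i = j then 1 else 0)"

fun mpow :: "nat \<Rightarrow> cmat \<Rightarrow> nat \<Rightarrow> cmat" where
  "mpow n A 0 = idm"
| "mpow n A (Suc k) = matmul n A (mpow n A k)"

definition kron :: "nat \<Rightarrow> cmat \<Rightarrow> cmat \<Rightarrow> cmat" where
  "kron n A B = (\<lambda>i j. A (i div n) (j div n) * B (i mod n) (j mod n))"

definition mapply :: "nat \<Rightarrow> cmat \<Rightarrow> cvec \<Rightarrow> cvec" where
  "mapply n A v = (\<lambda>i. \<Sum>j<n. A i j * v j)"

definition mtrace :: "nat \<Rightarrow> cmat \<Rightarrow> complex" where
  "mtrace n M = (\<Sum>i<n. M i i)"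

definition pauliX :: cmat where
  "pauliX = (\<lambda>a b. if a \<noteq> b then 1 else 0)"

definition pauliZ :: cmat where
  "pauliZ = (\<lambda>a b. if a = b then (if a = 0 then 1 else -1) else 0)"

definition phi_plus :: cvec where
  "phi_plus = (\<lambda>k. if k = 0 \<or> k = 3 then complex_of_real (1 / sqrt 2) else 0)"

definition bell :: "nat \<Rightarrow> nat \<Rightarrow> cvec" where
  "bell i j = mapply 4 (kron 2 idm (matmul 2 (mpow 2 pauliX i) (mpow 2 pauliZ j))) phi_plus"

definition proj :: "cvec \<Rightarrow> cmat" where
  "proj v = (\<lambda>a b. v a * cnj (v b))"

definition expect :: "nat \<Rightarrow> cmat \<Rightarrow> cvec \<Rightarrow> complex" where
  "expect n M v = (\<Sum>a<n. \<Sum>b<n. cnj (v a) * M a b * v b)"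

definition density :: "nat \<Rightarrow> cmat \<Rightarrow> bool" where
  "density n M \<longleftrightarrow>
     (\<forall>i<n. \<forall>j<n. M j i = cnj (M i j)) \<and>
     (\<forall>v. Im (expect n M v) = 0 \<and> Re (expect n M v) \<ge> 0) \<and>
     mtrace n M = 1"

definition S_pF :: "real \<Rightarrow> real \<Rightarrow> cmat \<Rightarrow> bool" where
  "S_pF p F \<rho> \<longleftrightarrow>
     (\<exists>\<sigma>. density 4 \<sigma> \<and>
        \<rho> = (\<lambda>a b. complex_of_real p * proj (bell 0 0) a b + complex_of_real (1 - p) * \<sigma> a b)) \<and>
     expect 4 \<rho> (bell 0 0) = complex_of_real F"

text \<open>tau1 on (A1,B1), tau2 on (A2,B2); joint order A1 B1 A2 B2.\<close>
definition tensor :: "cmat \<Rightarrow> cmat \<Rightarrow> cmat" where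
  "tensor t1 t2 = kron 4 t1 t2"

text \<open>Embed a two-qubit operator acting on (A1,A2) resp. (B1,B2) into the four-qubit space.\<close>
definition onA :: "cmat \<Rightarrow> cmat" where
  "onA P = (\<lambda>x y. P (2 * (x div 8) + (x div 2) mod 2) (2 * (y div 8) + (y div 2) mod 2) *
      (if (x div 4) mod 2 = (y div 4) mod 2 \<and> x mod 2 = y mod 2 then 1 else 0))"

definition onB :: "cmat \<Rightarrow> cmat" where
  "onB P = (\<lambda>x y. P (2 * ((x div 4) mod 2) + x mod 2) (2 * ((y div 4) mod 2) + y mod 2) *
      (if x div 8 = y div 8 \<and> (x div 2) mod 2 = (y div 2) mod 2 then 1 else 0))"

definition p'' :: "nat \<Rightarrow> nat \<Rightarrow> cmat \<Rightarrow> cmat \<Rightarrow> complex" where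
  "p'' i j t1 t2 = mtrace 16 (matmul 16 (onA (proj (bell i j))) (tensor t1 t2))"

text \<open>the product p'F' (numerator of F')\<close>
definition pF'' :: "nat \<Rightarrow> nat \<Rightarrow> cmat \<Rightarrow> cmat \<Rightarrow> complex" where
  "pF'' i j t1 t2 = mtrace 16 (matmul 16 (onB (proj (bell i j)))
                      (matmul 16 (onA (proj (bell i j))) (tensor t1 t2)))"

definition F'' :: "nat \<Rightarrow> nat \<Rightarrow> cmat \<Rightarrow> cmat \<Rightarrow> complex" where
  "F'' i j t1 t2 = pF'' i j t1 t2 / p'' i j t1 t2"

end

theory Submission
  imports Defs
begin

definition ev :: "nat \<Rightarrow> nat \<Rightarrow> nat \<Rightarrow> complex" where
 "ev i j k = (if i = 0 then (if j = 0 then (if k = 0 then 1 else if k = 3 then 1 else 0)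
                             else (if k = 0 then 1 else if k = 3 then -1 else 0))
              else (if j = 0 then (if k = 1 then 1 else if k = 2 then 1 else 0)
                             else (if k = 1 then 1 else if k = 2 then -1 else 0)))"

lemma bell_ev: assumes "i < 2" "j < 2" "k < 4"
  shows "bell i j k = complex_of_real (1 / sqrt 2) * ev i j k"
proof -
  have i: "i = 0 \<or> i = 1" and j: "j = 0 \<or> j = 1" using assms by auto
  have k: "k = 0 \<or> k = 1 \<or> k = 2 \<or> k = 3" using assms by auto
  show ?thesis using i j k
    by (auto simp: bell_def mapply_def kron_def matmul_def idm_def pauliX_def pauliZ_def
        phi_plus_def ev_def lessThan_nat_numeral pred_numeral_simps)
qed
lemma sum16: "(\<Sum>x<16. f x) = f 0 + f 1 + f 2 + f 3 + f 4 + f 5 + f 6 + f 7 + f 8 + f 9 + f 10 + f 11 + f 12 + f 13 + f 14 + f (15::nat)"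
  by (simp add: lessThan_nat_numeral algebra_simps)
lemma sum4: "(\<Sum>x<4. f x) = f 0 + f 1 + f 2 + f (3::nat)"
  by (simp add: lessThan_nat_numeral algebra_simps)

lemma proj_ev: assumes "i < 2" "j < 2" "a < 4" "b < 4"
  shows "proj (bell i j) a b = ev i j a * ev i j b / 2"
proof -
  have r: "ev i j a \<in> {0,1,-1}" "ev i j b \<in> {0,1,-1}" by (auto simp: ev_def)
  have c: "complex_of_real (1 / sqrt 2) * cnj (complex_of_real (1 / sqrt 2)) = 1/2"
    by (simp flip: of_real_mult)
  show ?thesis using r c assms
    by (auto simp: proj_def bell_ev)
qed

lemma p_lin1: "p'' i j (\<lambda>a b. c * X a b + d * Y a b) T = c * p'' i j X T + d * p'' i j Y T"
  by (simp add: p''_def mtrace_def matmul_def tensor_def kron_def sum_distrib_left sum.distrib algebra_simps)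
lemma p_lin2: "p'' i j T (\<lambda>a b. c * X a b + d * Y a b) = c * p'' i j T X + d * p'' i j T Y"
  by (simp add: p''_def mtrace_def matmul_def tensor_def kron_def sum_distrib_left sum.distrib algebra_simps)
lemma pF_lin1: "pF'' i j (\<lambda>a b. c * X a b + d * Y a b) T = c * pF'' i j X T + d * pF'' i j Y T"
  by (simp add: pF''_def mtrace_def matmul_def tensor_def kron_def sum_distrib_left sum.distrib algebra_simps)
lemma pF_lin2: "pF'' i j T (\<lambda>a b. c * X a b + d * Y a b) = c * pF'' i j T X + d * pF'' i j T Y"
  by (simp add: pF''_def mtrace_def matmul_def tensor_def kron_def sum_distrib_left sum.distrib algebra_simps)
lemma ij_cases: "i < 2 \<Longrightarrow> j < 2 \<Longrightarrow> (i = 0 \<and> j = 0) \<or> (i = 0 \<and> j = 1) \<or> (i = 1 \<and> j = 0) \<or> (i = 1 \<and> j = 1)" for i j :: nat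
  by auto

lemma p_phi_s: assumes "i < 2" "j < 2"
  shows "p'' i j (proj (bell 0 0)) s = (s 0 0 + s 1 1 + s 2 2 + s 3 3) / 4"
  using ij_cases[OF assms]
  apply (elim disjE conjE)
  apply (simp_all add: p''_def mtrace_def matmul_def tensor_def kron_def onA_def sum16 proj_ev ev_def field_simps)
  by (simp_all add: numeral_2_eq_2 numeral_3_eq_3)
lemma lt16: "x < (16::nat) \<Longrightarrow> x = 0 \<or> x = 1 \<or> x = 2 \<or> x = 3 \<or> x = 4 \<or> x = 5 \<or> x = 6 \<or> x = 7 \<or> x = 8 \<or> x = 9 \<or> x = 10 \<or> x = 11 \<or> x = 12 \<or> x = 13 \<or> x = 14 \<or> x = 15"
  by (simp add: less_Suc_eq eval_nat_numeral)
lemma pF_Q: "pF'' i j t1 t2 = (\<Sum>x<16. \<Sum>z<16. matmul 16 (onB (proj (bell i j))) (onA (proj (bell i j))) x z * tensor t1 t2 z x)"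
  unfolding pF''_def mtrace_def matmul_def
  apply (simp add: sum_distrib_left sum_distrib_right mult.assoc)
  apply (rule sum.cong[OF refl])
  apply (rule sum.swap)
  done
lemma bit_cases: "a < (2::nat) \<Longrightarrow> a = 0 \<or> a = 1" by auto

lemma bits: assumes "a < 2" "b < 2" "c < 2" "d < (2::nat)"
  shows "(8*a+4*b+2*c+d) div 8 = a" "((8*a+4*b+2*c+d) div 4) mod 2 = b"
        "((8*a+4*b+2*c+d) div 2) mod 2 = c" "(8*a+4*b+2*c+d) mod 2 = d"
  using bit_cases[OF assms(1)] bit_cases[OF assms(2)] bit_cases[OF assms(3)] bit_cases[OF assms(4)]
  by auto

lemma decomp: assumes "y < (16::nat)"
  obtains a b c d where "a < 2" "b < 2" "c < 2" "d < 2" "y = 8*a+4*b+2*c+d"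
proof
  show "y div 8 < 2" using assms by simp
  show "(y div 4) mod 2 < 2" "(y div 2) mod 2 < 2" "y mod 2 < 2" by simp_all
  show "y = 8 * (y div 8) + 4 * ((y div 4) mod 2) + 2 * ((y div 2) mod 2) + y mod 2"
    using lt16[OF assms] by (elim disjE) simp_all
qed

lemma sum2: "(\<Sum>x<2. f x) = f 0 + f (1::nat)"
  unfolding numeral_2_eq_2 by simp

lemma sum16_bits: "(\<Sum>y<16. g y) = (\<Sum>a<2. \<Sum>b<2. \<Sum>c<2. \<Sum>d<2. g (8*a+4*b+2*c+(d::nat)))"
  by (simp add: sum16 sum2 algebra_simps) (simp add: numeral_2_eq_2 numeral_3_eq_3 ac_simps)

lemma Qform: assumes "x < 16" "z < 16"
  shows "matmul 16 (onB P) (onA P) x z =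
    P (2 * ((x div 4) mod 2) + x mod 2) (2 * ((z div 4) mod 2) + z mod 2) *
    P (2 * (x div 8) + (x div 2) mod 2) (2 * (z div 8) + (z div 2) mod 2)"
proof -
  obtain xa xb xc xd where xb: "xa < 2" "xb < 2" "xc < 2" "xd < 2" and x: "x = 8*xa+4*xb+2*xc+xd"
    using decomp[OF assms(1)] by blast
  obtain za zb zc zd where zb: "za < 2" "zb < 2" "zc < 2" "zd < 2" and z: "z = 8*za+4*zb+2*zc+zd"
    using decomp[OF assms(2)] by blast
  have e: "matmul 16 (onB P) (onA P) x z = (\<Sum>a<2. \<Sum>b<2. \<Sum>c<2. \<Sum>d<2.
     (P (2 * xb + xd) (2 * b + d) * (if xa = a \<and> xc = c then 1 else 0)) *
     (P (2 * a + c) (2 * za + zc) * (if b = zb \<and> d = zd then 1 else 0)))"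
    unfolding matmul_def sum16_bits onA_def onB_def
    by (intro sum.cong refl) (simp add: x z bits xb zb)
  show ?thesis unfolding e
    using bit_cases[OF xb(1)] bit_cases[OF xb(3)] bit_cases[OF zb(2)] bit_cases[OF zb(4)]
    by (simp add: x z bits xb zb sum2) (elim disjE; simp)
qed

lemma pF_phi_s: assumes "i < 2" "j < 2"
  shows "pF'' i j (proj (bell 0 0)) s = (s 0 0 + s 0 3 + s 3 0 + s 3 3) / 8"
  using ij_cases[OF assms]
  apply (elim disjE conjE)
  apply (simp_all add: pF_Q Qform tensor_def kron_def sum16 proj_ev ev_def field_simps)
  by (simp_all add: numeral_2_eq_2 numeral_3_eq_3)
lemma pF_s_phi: assumes "i < 2" "j < 2"
  shows "pF'' i j s (proj (bell 0 0)) = (s 0 0 + s 0 3 + s 3 0 + s 3 3) / 8"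
  using ij_cases[OF assms]
  apply (elim disjE conjE)
  by (simp_all add: pF_Q Qform tensor_def kron_def sum16 proj_ev ev_def field_simps)

lemma p_s_phi: assumes "i < 2" "j < 2"
  shows "p'' i j s (proj (bell 0 0)) = (s 0 0 + s 1 1 + s 2 2 + s 3 3) / 4"
  using ij_cases[OF assms]
  apply (elim disjE conjE)
  by (simp_all add: p''_def mtrace_def matmul_def tensor_def kron_def onA_def sum16 proj_ev ev_def field_simps)

lemma expect_aux: "(\<Sum>a<4. \<Sum>b<4. cnj (t * ev 0 0 a) * M a b * (t * ev 0 0 b)) = (M 0 0 + M 0 3 + M 3 0 + M 3 3) * (cnj t * t)"
  by (simp add: sum4 ev_def algebra_simps)

lemma expect_b00: "expect 4 M (bell 0 0) = (M 0 0 + M 0 3 + M 3 0 + M 3 3) / 2"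
proof -
  have c: "cnj (complex_of_real (1 / sqrt 2)) * complex_of_real (1 / sqrt 2) = 1/2"
    by (simp flip: of_real_mult)
  have "expect 4 M (bell 0 0) = (\<Sum>a<4. \<Sum>b<4. cnj (complex_of_real (1 / sqrt 2) * ev 0 0 a) * M a b * (complex_of_real (1 / sqrt 2) * ev 0 0 b))"
    unfolding expect_def by (intro sum.cong refl) (simp add: bell_ev)
  also have "\<dots> = (M 0 0 + M 0 3 + M 3 0 + M 3 3) * (cnj (complex_of_real (1 / sqrt 2)) * complex_of_real (1 / sqrt 2))"
    by (rule expect_aux)
  finally show ?thesis using c by simp
qed

lemma phi_vals: "proj (bell 0 0) 0 0 = 1/2" "proj (bell 0 0) 0 3 = 1/2" "proj (bell 0 0) 3 0 = 1/2" "proj (bell 0 0) 3 3 = 1/2"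
  "proj (bell 0 0) 1 1 = 0" "proj (bell 0 0) 2 2 = 0"
  by (simp_all add: proj_ev ev_def)

lemma algA: fixes cp cq X :: complex assumes "cq = 1 - cp"
  shows "cp * (cp * (1/4) + cq * (1/4)) + cq * (cp * (1/4) + cq * X) = (2 * cp - cp^2 + 4 * cq^2 * X) / 4"
  unfolding assms by (simp add: field_simps power2_eq_square)

lemma algB: fixes cp cq X e1 e2 f :: complex assumes "cq = 1 - cp"
  and "f = (cp * 2 + cq * e1) / 2" and "f = (cp * 2 + cq * e2) / 2"
  shows "cp * (cp * (1/4) + cq * (e2 / 8)) + cq * (cp * (e1 / 8) + cq * X) = (2 * cp * f - cp^2 + 4 * cq^2 * X) / 4"
proof -
  have h: "2 * cp * f = cp * (cp * 2 + cq * e1) / 2 + cp * (cp * 2 + cq * e2) / 2"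
    using assms(2,3) by (simp add: field_simps)
  show ?thesis unfolding h by (simp add: field_simps power2_eq_square)
qed

lemma div4: "(x::complex) / 4 / (y / 4) = x / y"
  by (cases "y = 0") (simp_all add: field_simps)

theorem lemma5:
  fixes F p :: real and \<sigma>1 \<sigma>2 \<rho>1 \<rho>2 :: cmat and i j :: nat
  assumes "0 \<le> F" "F \<le> 1" "0 \<le> p" "p \<le> F"
    and "density 4 \<sigma>1" "density 4 \<sigma>2"
    and "\<rho>1 = (\<lambda>a b. complex_of_real p * proj (bell 0 0) a b + complex_of_real (1 - p) * \<sigma>1 a b)"
    and "\<rho>2 = (\<lambda>a b. complex_of_real p * proj (bell 0 0) a b + complex_of_real (1 - p) * \<sigma>2 a b)"
    and "S_pF p F \<rho>1" "S_pF p F \<rho>2"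
    and "i < 2" "j < 2"
  shows "p'' i j \<rho>1 \<rho>2 = complex_of_real (p / 2 - p^2 / 4) + complex_of_real ((1 - p)^2) * p'' i j \<sigma>1 \<sigma>2 \<and>
         F'' i j \<rho>1 \<rho>2 =
           (complex_of_real (2 * p * F - p^2) + 4 * complex_of_real ((1 - p)^2) * pF'' i j \<sigma>1 \<sigma>2) /
           (complex_of_real (2 * p - p^2) + 4 * complex_of_real ((1 - p)^2) * p'' i j \<sigma>1 \<sigma>2)"
proof -
  define P where "P = proj (bell 0 0)"
  define cp where "cp = complex_of_real p"
  define cq where "cq = complex_of_real (1 - p)"
  define cf where "cf = complex_of_real F"
  have q: "cq = 1 - cp" by (simp add: cp_def cq_def)
  have tr1: "\<sigma>1 0 0 + \<sigma>1 1 1 + \<sigma>1 2 2 + \<sigma>1 3 3 = 1"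
    using assms(5) unfolding density_def mtrace_def sum4 by blast
  have tr2: "\<sigma>2 0 0 + \<sigma>2 1 1 + \<sigma>2 2 2 + \<sigma>2 3 3 = 1"
    using assms(6) unfolding density_def mtrace_def sum4 by blast
  have r1: "\<rho>1 = (\<lambda>a b. cp * P a b + cq * \<sigma>1 a b)" using assms(7) by (simp add: cp_def cq_def P_def)
  have r2: "\<rho>2 = (\<lambda>a b. cp * P a b + cq * \<sigma>2 a b)" using assms(8) by (simp add: cp_def cq_def P_def)
  have ex1: "expect 4 \<rho>1 (bell 0 0) = cf" using assms(9) unfolding S_pF_def cf_def by blast
  have ex2: "expect 4 \<rho>2 (bell 0 0) = cf" using assms(10) unfolding S_pF_def cf_def by blast
  have E1: "cf = (cp * 2 + cq * (\<sigma>1 0 0 + \<sigma>1 0 3 + \<sigma>1 3 0 + \<sigma>1 3 3)) / 2"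
    unfolding ex1[symmetric] expect_b00 r1 P_def phi_vals by (simp add: field_simps)
  have E2: "cf = (cp * 2 + cq * (\<sigma>2 0 0 + \<sigma>2 0 3 + \<sigma>2 3 0 + \<sigma>2 3 3)) / 2"
    unfolding ex2[symmetric] expect_b00 r2 P_def phi_vals by (simp add: field_simps)
  have PP: "p'' i j P P = 1/4" "pF'' i j P P = 1/4"
    unfolding P_def p_phi_s[OF assms(11,12)] pF_phi_s[OF assms(11,12)] phi_vals by simp_all
  have Ps: "p'' i j P \<sigma>2 = 1/4" "p'' i j \<sigma>1 P = 1/4"
    unfolding P_def using assms(11,12) tr1 tr2 by (simp_all add: p_phi_s p_s_phi)
  have pFs: "pF'' i j P \<sigma>2 = (\<sigma>2 0 0 + \<sigma>2 0 3 + \<sigma>2 3 0 + \<sigma>2 3 3) / 8"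
     "pF'' i j \<sigma>1 P = (\<sigma>1 0 0 + \<sigma>1 0 3 + \<sigma>1 3 0 + \<sigma>1 3 3) / 8"
    unfolding P_def using assms(11,12) by (simp_all add: pF_phi_s pF_s_phi)
  have pr: "p'' i j \<rho>1 \<rho>2 = cp * (cp * p'' i j P P + cq * p'' i j P \<sigma>2) + cq * (cp * p'' i j \<sigma>1 P + cq * p'' i j \<sigma>1 \<sigma>2)"
    unfolding r1 r2 by (simp only: p_lin1 p_lin2)
  have pFr: "pF'' i j \<rho>1 \<rho>2 = cp * (cp * pF'' i j P P + cq * pF'' i j P \<sigma>2) + cq * (cp * pF'' i j \<sigma>1 P + cq * pF'' i j \<sigma>1 \<sigma>2)"
    unfolding r1 r2 by (simp only: pF_lin1 pF_lin2)
  have cv: "complex_of_real (2 * p - p^2) = 2 * cp - cp^2" "complex_of_real ((1 - p)^2) = cq^2"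
     "complex_of_real (2 * p * F - p^2) = 2 * cp * cf - cp^2"
     "complex_of_real (p / 2 - p^2 / 4) = (2 * cp - cp^2) / 4"
    by (simp_all add: cp_def cq_def cf_def)
  have A: "p'' i j \<rho>1 \<rho>2 = (complex_of_real (2 * p - p^2) + 4 * complex_of_real ((1 - p)^2) * p'' i j \<sigma>1 \<sigma>2) / 4"
    unfolding pr PP Ps cv using algA[OF q] by simp
  have B: "pF'' i j \<rho>1 \<rho>2 = (complex_of_real (2 * p * F - p^2) + 4 * complex_of_real ((1 - p)^2) * pF'' i j \<sigma>1 \<sigma>2) / 4"
    unfolding pFr PP pFs cv using algB[OF q E1 E2] by simp
  show ?thesis
  proof
    show "p'' i j \<rho>1 \<rho>2 = complex_of_real (p / 2 - p^2 / 4) + complex_of_real ((1 - p)^2) * p'' i j \<sigma>1 \<sigma>2"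
      unfolding A cv by (simp add: field_simps)
    show "F'' i j \<rho>1 \<rho>2 = (complex_of_real (2 * p * F - p^2) + 4 * complex_of_real ((1 - p)^2) * pF'' i j \<sigma>1 \<sigma>2) /
           (complex_of_real (2 * p - p^2) + 4 * complex_of_real ((1 - p)^2) * p'' i j \<sigma>1 \<sigma>2)"
      unfolding F''_def A B by (rule div4)
  qed
qed
end
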